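(* Let $f\in\Gamma=\mathbb Q[p_1,p_3,p_5,\dots]$ be homogeneous of degree $n\ge1$, and write $$f=\sum_{\substack{\lambda\vdash n\\ \text{all parts odd}}}a_\lambda V_\lambda=\sum_{\lambda}b_\lambda P_\lambda,$$ the second sum over partitions $\lambda$ of $n$ into distinct parts. Then $\sum_\lambda a_\lambda=b_{(n)}$, the coefficient of the one-row function $P_n$.
   Context: Symmetric functions are in variables $x=(x_1,x_2,\dots)$ with rational coefficients, $p_k$ is the power sum, and $\Gamma=\mathbb Q[p_1,p_3,p_5,\dots]$. For a partition $\lambda$ with distinct parts, $P_\lambda$ is Schur's $P$-function (as in Macdonald, Ch. III.8); the $P_\lambda$ with $\lambda$ strict of size $n$ form a basis of the degree-$n$ part of $\Gamma$. The one-row functions satisfy $1+2\sum_{n\ge1}P_n(x)t^n=\prod_i\frac{1+x_it}{1-x_it}$. For any partition $\lambda$, $V_\lambda=P_{\lambda_1}P_{\lambda_2}\cdots$; the $V_\lambda$ with $\lambda$ having only odd parts form a basis of $\Gamma$. *)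

theory Defs
  imports "HOL-Combinatorics.Permutations" "HOL-Computational_Algebra.Formal_Power_Series"
begin

text \<open>A symmetric function is identified with its family of evaluations at finitely
many (rational) variables x_1,...,x_m, for every m.\<close>

definition partitions :: "nat \<Rightarrow> nat list set" where
  "partitions n = {lam. sorted_wrt (\<ge>) lam \<and> (\<forall>k\<in>set lam. 0 < k) \<and> sum_list lam = n}"

definition odd_partitions :: "nat \<Rightarrow> nat list set" where
  "odd_partitions n = {lam \<in> partitions n. \<forall>k\<in>set lam. odd k}"

definition strict_partitions :: "nat \<Rightarrow> nat list set" where
  "strict_partitions n = {lam. sorted_wrt (>) lam \<and> (\<forall>k\<in>set lam. 0 < k) \<and> sum_list lam = n}"

definition qgen :: "rat list \<Rightarrow> rat fps" where
  "qgen xs = prod_list (map (\<lambda>x. (1 + fps_const x * fps_X) / (1 - fps_const x * fps_X)) xs)"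

text \<open>One-row Schur P-function P_k (k \<ge> 1): 1 + 2 sum P_k t^k = qgen.\<close>
definition Prow :: "nat \<Rightarrow> rat list \<Rightarrow> rat" where
  "Prow k xs = fps_nth (qgen xs) k / 2"

definition Vfun :: "nat list \<Rightarrow> rat list \<Rightarrow> rat" where
  "Vfun lam xs = prod_list (map (\<lambda>k. Prow k xs) lam)"

text \<open>Schur P-function for strict lambda in m = length xs variables (Macdonald III.8):
  P_lambda = sum over w in S_m / S_{m-l} of w( x^lambda prod_{i<=l, i<j<=m} (x_i+x_j)/(x_i-x_j) ),
  written as (1/(m-l)!) times the sum over all of S_m; it is 0 if l > m.
  (The formula is evaluated at pairwise distinct variables.)\<close>
definition Pschur :: "nat list \<Rightarrow> rat list \<Rightarrow> rat" where
  "Pschur lam xs =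
    (let m = length xs; l = length lam in
     if l \<le> m then
       (1 / of_nat (fact (m - l))) *
       (\<Sum>w | w permutes {..<m}.
          (\<Prod>i<l. (xs ! w i) ^ (lam ! i)) *
          (\<Prod>i<l. \<Prod>j\<in>{i<..<m}. (xs ! w i + xs ! w j) / (xs ! w i - xs ! w j)))
     else 0)"

end

theory Submission
  imports Defs
begin

lemma qgen_one_nth: "k \<ge> 1 \<Longrightarrow> fps_nth (qgen [1]) k = 2"
proof -
  assume k: "k \<ge> 1"
  have "qgen [1] = (1 + fps_X) / (1 - fps_X)" by (simp add: qgen_def)
  also have "\<dots> = (1 + fps_X) * Abs_fps (\<lambda>n. 1::rat)"
    by (simp add: fps_divide_unit fps_inverse_one_minus_fps_X)
  finally have "fps_nth (qgen [1]) k = fps_nth ((1 + fps_X) * Abs_fps (\<lambda>n. 1::rat)) k" by simp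
  also have "\<dots> = 2" using k by (simp add: distrib_right)
  finally show ?thesis .
qed

lemma Prow_one: "k \<ge> 1 \<Longrightarrow> Prow k [1] = 1"
  by (simp add: Prow_def qgen_one_nth)

lemma Vfun_one: "lam \<in> odd_partitions n \<Longrightarrow> Vfun lam [1] = 1"
proof -
  assume "lam \<in> odd_partitions n"
  then have "\<forall>k\<in>set lam. 0 < k" by (simp add: odd_partitions_def partitions_def)
  then have "map (\<lambda>k. Prow k [1]) lam = map (\<lambda>k. 1) lam"
    by (intro map_cong) (auto simp: Prow_one)
  then show ?thesis by (simp add: Vfun_def map_replicate_const)
qed

lemma Pschur_long: "length lam > 1 \<Longrightarrow> Pschur lam [1] = 0"
  by (simp add: Pschur_def)

lemma Pschur_n: "Pschur [n] [1] = 1"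
proof -
  have "{w. w permutes {..<Suc 0}} = {id}"
    by (simp add: lessThan_Suc)
  then show ?thesis by (simp add: Pschur_def)
qed

lemma strict_n: "n \<ge> 1 \<Longrightarrow> [n] \<in> strict_partitions n"
  by (simp add: strict_partitions_def)

lemma strict_other: "lam \<in> strict_partitions n \<Longrightarrow> n \<ge> 1 \<Longrightarrow> lam \<noteq> [n] \<Longrightarrow> length lam > 1"
proof -
  assume a: "lam \<in> strict_partitions n" "n \<ge> 1" "lam \<noteq> [n]"
  show ?thesis
  proof (cases lam)
    case Nil then show ?thesis using a by (simp add: strict_partitions_def)
  next
    case (Cons x xs) then show ?thesis using a by (cases xs) (auto simp: strict_partitions_def)
  qed
qed

lemma len_le_sum: "(\<forall>k\<in>set xs. (0::nat) < k) \<Longrightarrow> length xs \<le> sum_list xs"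
  by (induction xs) auto

lemma strict_finite: "finite (strict_partitions n)"
proof (rule finite_subset)
  show "strict_partitions n \<subseteq> {xs. set xs \<subseteq> {..n} \<and> length xs \<le> n}"
    using len_le_sum member_le_sum_list by (fastforce simp: strict_partitions_def)
  show "finite {xs. set xs \<subseteq> {..n::nat} \<and> length xs \<le> n}"
    by (intro finite_lists_length_le) simp
qed

theorem lemma3p5:
  fixes n :: nat and a b :: "nat list \<Rightarrow> rat"
  assumes "n \<ge> 1"
    and "\<forall>xs :: rat list. distinct xs \<longrightarrow>
           (\<Sum>lam\<in>odd_partitions n. a lam * Vfun lam xs)
         = (\<Sum>lam\<in>strict_partitions n. b lam * Pschur lam xs)"
  shows "(\<Sum>lam\<in>odd_partitions n. a lam) = b [n]"
proof -
  have e: "(\<Sum>lam\<in>odd_partitions n. a lam * Vfun lam [1])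
         = (\<Sum>lam\<in>strict_partitions n. b lam * Pschur lam [1])"
    using assms(2) by simp
  have l: "(\<Sum>lam\<in>odd_partitions n. a lam * Vfun lam [1]) = (\<Sum>lam\<in>odd_partitions n. a lam)"
    by (intro sum.cong) (auto simp: Vfun_one)
  have r: "(\<Sum>lam\<in>strict_partitions n. b lam * Pschur lam [1])
      = (\<Sum>lam\<in>strict_partitions n. if lam = [n] then b lam else 0)"
  proof (rule sum.cong)
    fix x assume x: "x \<in> strict_partitions n"
    show "b x * Pschur x [1] = (if x = [n] then b x else 0)"
    proof (cases "x = [n]")
      case True then show ?thesis by (simp add: Pschur_n)
    next
      case False then show ?thesis using strict_other[OF x assms(1) False] by (simp add: Pschur_long)
    qed
  qed simp
  also have "\<dots> = b [n]"
    using strict_n[OF assms(1)] by (simp add: strict_finite)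
  finally show ?thesis using e l by simp
qed

end
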